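(* Let $(g(x))_{x\ge0}$ be a semigroup acting on a real finite-dimensional vector space $V$, let $V=\bigoplus_{i=1}^nV_i$ be an SRPD, and let $V_i$ be a component of first type with eigenvalue $\lambda(x)$. Then there exists a nonzero $v\in V_i$ such that $g(x)v=\lambda(x)v$ for all $x>0$.
   Context: A semigroup is a map $g:[0,\infty)\to L(V)$ with $g(0)=\mathrm{id}$ and $g(x+y)=g(x)g(y)$ for all $x,y\ge0$. A simultaneous real primary decomposition (SRPD) is a decomposition $V=\bigoplus_{i=1}^nV_i$ into nonzero subspaces, each $g(x)$-invariant for all $x\ge0$, such that each $V_i$ is either of first type: for every $x\ge0$, $g(x)|_{V_i}$ has exactly one (complex) eigenvalue $\lambda(x)$, which is real and $\ge0$; or of second type: for every $x\ge 0$ the eigenvalues of $g(x)|_{V_i}$ lie in $\{\lambda(x),\overline{\lambda(x)}\}$ for some $\lambda(x)\in\mathbb C$, with $\lambda(x)\notin\mathbb R$ for some $x$. *)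

theory Defs
  imports "HOL-Analysis.Analysis"
begin

text \<open>A semigroup of linear maps on the real finite-dimensional space 'v, indexed by [0,\<infinity>).
  Values of g at negative arguments are irrelevant.\<close>
definition lin_semigroup :: "(real \<Rightarrow> 'v::euclidean_space \<Rightarrow> 'v) \<Rightarrow> bool" where
  "lin_semigroup g \<longleftrightarrow>
     (\<forall>x\<ge>0. linear (g x)) \<and> g 0 = id \<and>
     (\<forall>x y. x \<ge> 0 \<longrightarrow> y \<ge> 0 \<longrightarrow> g (x + y) = g x \<circ> g y)"

text \<open>mu is a (complex) eigenvalue of the restriction of the real linear map T to the
  invariant subspace W, i.e. an eigenvalue of the complexification of T|W:
  T(u + i w) = mu (u + i w) for some nonzero u + i w with u, w in W.\<close>
definition cplx_eigenvalue_on :: "('v::euclidean_space \<Rightarrow> 'v) \<Rightarrow> 'v set \<Rightarrow> complex \<Rightarrow> bool" where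
  "cplx_eigenvalue_on T W mu \<longleftrightarrow>
     (\<exists>u\<in>W. \<exists>w\<in>W. (u \<noteq> 0 \<or> w \<noteq> 0) \<and>
        T u = Re mu *\<^sub>R u - Im mu *\<^sub>R w \<and>
        T w = Im mu *\<^sub>R u + Re mu *\<^sub>R w)"

definition eigenvalues_on :: "('v::euclidean_space \<Rightarrow> 'v) \<Rightarrow> 'v set \<Rightarrow> complex set" where
  "eigenvalues_on T W = {mu. cplx_eigenvalue_on T W mu}"

definition first_type :: "(real \<Rightarrow> 'v::euclidean_space \<Rightarrow> 'v) \<Rightarrow> 'v set \<Rightarrow> bool" where
  "first_type g W \<longleftrightarrow>
     (\<forall>x\<ge>0. \<exists>l::real. l \<ge> 0 \<and> eigenvalues_on (g x) W = {complex_of_real l})"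

definition second_type :: "(real \<Rightarrow> 'v::euclidean_space \<Rightarrow> 'v) \<Rightarrow> 'v set \<Rightarrow> bool" where
  "second_type g W \<longleftrightarrow>
     (\<exists>lam::real \<Rightarrow> complex.
        (\<forall>x\<ge>0. eigenvalues_on (g x) W \<subseteq> {lam x, cnj (lam x)}) \<and>
        (\<exists>x\<ge>0. lam x \<notin> \<real>))"

text \<open>Simultaneous real primary decomposition V = V_0 + ... + V_(n-1) (direct sum).\<close>
definition SRPD :: "(real \<Rightarrow> 'v::euclidean_space \<Rightarrow> 'v) \<Rightarrow> nat \<Rightarrow> (nat \<Rightarrow> 'v set) \<Rightarrow> bool" where
  "SRPD g n Vs \<longleftrightarrow>
     (\<forall>i<n. subspace (Vs i) \<and> Vs i \<noteq> {0} \<and> (\<forall>x\<ge>0. g x ` Vs i \<subseteq> Vs i)) \<and>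
     (\<forall>y. \<exists>v. (\<forall>i<n. v i \<in> Vs i) \<and> y = (\<Sum>i<n. v i)) \<and>
     (\<forall>v. (\<forall>i<n. v i \<in> Vs i) \<and> (\<Sum>i<n. v i) = 0 \<longrightarrow> (\<forall>i<n. v i = 0)) \<and>
     (\<forall>i<n. first_type g (Vs i) \<or> second_type g (Vs i))"

end

theory Submission imports Defs "HOL-Computational_Algebra.Fundamental_Theorem_Algebra" begin

definition peval :: "real poly \<Rightarrow> ('v::real_vector \<Rightarrow> 'v) \<Rightarrow> 'v \<Rightarrow> 'v" where
  "peval c T u = (\<Sum>k<Suc (degree c). coeff c k *\<^sub>R (T^^k) u)"

lemma peval_N: assumes "degree c < N"
  shows "peval c T u = (\<Sum>k<N. coeff c k *\<^sub>R (T^^k) u)"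
proof -
  have "(\<Sum>k<N. coeff c k *\<^sub>R (T^^k) u) = (\<Sum>k<Suc (degree c). coeff c k *\<^sub>R (T^^k) u)"
    using assms by (intro sum.mono_neutral_right) (auto simp: coeff_eq_0)
  then show ?thesis by (simp add: peval_def)
qed

lemma peval_add: "peval (c + d) T u = peval c T u + peval d T u"
proof -
  define N where "N = Suc (max (degree c) (degree d))"
  have "degree (c+d) < N" unfolding N_def using degree_add_le_max[of c d] by simp
  then show ?thesis
    by (subst (1 2 3) peval_N[where N=N]) (auto simp: N_def scaleR_add_left sum.distrib)
qed

lemma peval_smult: "peval (smult a c) T u = a *\<^sub>R peval c T u"
proof -
  have "degree (smult a c) < Suc (degree c)" using degree_smult_le[of a c] by simp
  then show ?thesis
    by (subst (1 2) peval_N[where N="Suc (degree c)"]) (auto simp: scaleR_sum_right simp del: sum.lessThan_Suc)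
qed

lemma peval_const: "peval [:a:] T u = a *\<^sub>R u"
  by (simp add: peval_def)

lemma peval_X: assumes "linear T"
  shows "peval (pCons 0 c) T u = T (peval c T u)"
proof -
  have d: "degree (pCons 0 c) < Suc (Suc (degree c))" by (simp add: degree_pCons_le le_imp_less_Suc)
  have "peval (pCons 0 c) T u = (\<Sum>k<Suc (Suc (degree c)). coeff (pCons 0 c) k *\<^sub>R (T^^k) u)"
    by (rule peval_N[OF d])
  also have "\<dots> = (\<Sum>k<Suc (degree c). coeff c k *\<^sub>R (T^^(Suc k)) u)"
    by (subst sum.lessThan_Suc_shift) simp
  also have "\<dots> = T (peval c T u)"
    by (simp only: peval_def linear_sum[OF assms] linear_cmul[OF assms] funpow.simps comp_def)
  finally show ?thesis .
qed

lemma peval_in: assumes "subspace U" "T ` U \<subseteq> U" "u \<in> U" shows "peval c T u \<in> U"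
proof -
  have "(T^^k) u \<in> U" for k by (induction k) (use assms in auto)
  then show ?thesis unfolding peval_def using assms(1)
    by (intro subspace_sum subspace_scale) auto
qed

lemma poly_of_coeffs:
  fixes a :: "nat \<Rightarrow> real" and d :: nat
  defines "c \<equiv> (\<Sum>k\<le>d. monom (a k) k)"
  shows "coeff c j = (if j \<le> d then a j else 0)"
    and "degree c \<le> d"
    and "peval c T u = (\<Sum>k\<le>d. a k *\<^sub>R (T^^k) u)"
proof -
  show cf: "coeff c j = (if j \<le> d then a j else 0)" for j
    unfolding c_def by (auto simp: coeff_sum coeff_monom)
  show dg: "degree c \<le> d" by (rule degree_le) (auto simp: cf)
  show "peval c T u = (\<Sum>k\<le>d. a k *\<^sub>R (T^^k) u)"
    using dg by (subst peval_N[where N="Suc d"]) (auto simp: cf lessThan_Suc_atMost)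
qed

lemma exists_annihilating:
  fixes T :: "'v::euclidean_space \<Rightarrow> 'v"
  shows "\<exists>c. c \<noteq> 0 \<and> peval c T u = 0"
proof -
  define d where "d = DIM('v)"
  define f where "f k = (T^^k) u" for k
  have key: "\<exists>a. (\<exists>k\<le>d. a k \<noteq> 0) \<and> (\<Sum>k\<le>d. a k *\<^sub>R f k) = 0"
  proof (cases "inj_on f {..d}")
    case True
    have "card (f ` {..d}) = Suc d" using True by (simp add: card_image)
    hence "\<not> independent (f ` {..d})" using independent_bound[of "f ` {..d}"] d_def by auto
    then obtain w where w: "\<exists>v\<in>f ` {..d}. w v \<noteq> 0" "(\<Sum>v\<in>f ` {..d}. w v *\<^sub>R v) = 0"
      using dependent_finite[of "f ` {..d}"] by auto
    have "(\<Sum>k\<le>d. w (f k) *\<^sub>R f k) = 0" using w(2) by (simp add: sum.reindex[OF True])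
    with w(1) show ?thesis by (intro exI[of _ "\<lambda>k. w (f k)"]) auto
  next
    case False
    then obtain i j where ij: "i \<le> d" "j \<le> d" "i \<noteq> j" "f i = f j" unfolding inj_on_def by auto
    define a where "a k = (if k = j then 1 else if k = i then -1 else (0::real))" for k
    have "(\<Sum>k\<le>d. a k *\<^sub>R f k) = (\<Sum>k\<in>{i,j}. a k *\<^sub>R f k)"
      using ij by (intro sum.mono_neutral_right) (auto simp: a_def)
    also have "\<dots> = 0" using ij by (simp add: a_def)
    finally show ?thesis using ij by (intro exI[of _ a]) (auto simp: a_def)
  qed
  then obtain a where a: "\<exists>k\<le>d. a k \<noteq> 0" "(\<Sum>k\<le>d. a k *\<^sub>R f k) = 0" by blast
  define c where "c = (\<Sum>k\<le>d. monom (a k) k)"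
  have "c \<noteq> 0" using a(1) poly_of_coeffs(1)[of a d] c_def by (metis coeff_0)
  moreover have "peval c T u = 0" using a(2) poly_of_coeffs(3)[of a d T u] c_def f_def by simp
  ultimately show ?thesis by blast
qed

lemma exists_cplx_eig:
  fixes T :: "'v::euclidean_space \<Rightarrow> 'v"
  assumes lin: "linear T" and sU: "subspace U" and inv: "T ` U \<subseteq> U" and u: "u \<in> U" "u \<noteq> 0"
  shows "\<exists>mu. cplx_eigenvalue_on T U mu"
proof -
  define P where "P n = (\<exists>c. c \<noteq> 0 \<and> peval c T u = 0 \<and> degree c = n)" for n
  have "\<exists>n. P n" using exists_annihilating[of T u] unfolding P_def by blast
  define m where "m = (LEAST n. P n)"
  have Pm: "P m" unfolding m_def using \<open>\<exists>n. P n\<close> by (metis LeastI)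
  then obtain p where p: "p \<noteq> 0" "peval p T u = 0" "degree p = m" unfolding P_def by blast
  have small: "peval c T u \<noteq> 0" if "c \<noteq> 0" "degree c < m" for c
  proof -
    have "\<not> P (degree c)" using not_less_Least[of "degree c" P] that(2) unfolding m_def by blast
    then show ?thesis using that(1) unfolding P_def by blast
  qed
  have "m \<noteq> 0"
  proof
    assume "m = 0"
    then obtain a where "p = [:a:]" using p(3) by (metis degree_eq_zeroE)
    with p show False using u by (simp add: peval_const)
  qed
  define pc where "pc = map_poly complex_of_real p"
  have dpc: "degree pc = m" unfolding pc_def using p(3) by (simp add: degree_map_poly)
  have cpc: "coeff pc k = complex_of_real (coeff p k)" for k unfolding pc_def by (simp add: coeff_map_poly)
  obtain z where z: "poly pc z = 0"
    using fundamental_theorem_of_algebra[of pc] constant_degree[of pc] dpc \<open>m \<noteq> 0\<close> by auto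
  define q where "q = synthetic_div pc z"
  have pcq: "pc = [:-z,1:] * q" using synthetic_div_correct'[of z pc] z unfolding q_def by simp
  have "q \<noteq> 0" using pcq p(1) dpc \<open>m \<noteq> 0\<close> by auto
  have "degree ([:-z,1:] * q) = degree [:-z,1:] + degree q"
    using \<open>q \<noteq> 0\<close> by (intro degree_mult_eq) auto
  hence "degree pc = degree q + 1" using pcq by simp
  hence dq: "degree q < m" using dpc by simp
  define q1 where "q1 = map_poly Re q"
  define q2 where "q2 = map_poly Im q"
  have c1: "coeff q1 k = Re (coeff q k)" for k unfolding q1_def by (simp add: coeff_map_poly)
  have c2: "coeff q2 k = Im (coeff q k)" for k unfolding q2_def by (simp add: coeff_map_poly)
  have cq: "coeff pc k = - z * coeff q k + coeff (pCons 0 q) k" for k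
  proof -
    have "pc = smult (-z) q + pCons 0 q" using pcq by simp
    then show ?thesis by (metis coeff_add coeff_smult)
  qed
  have e1: "p + smult (Re z) q1 = pCons 0 q1 + smult (Im z) q2"
  proof (rule poly_eqI)
    fix k
    have "Re (coeff pc k) = Re (- z * coeff q k + coeff (pCons 0 q) k)" by (simp add: cq)
    then show "coeff (p + smult (Re z) q1) k = coeff (pCons 0 q1 + smult (Im z) q2) k"
      by (cases k) (simp_all add: cpc c1 c2 coeff_pCons)
  qed
  have e2: "pCons 0 q2 = smult (Re z) q2 + smult (Im z) q1"
  proof (rule poly_eqI)
    fix k
    have "Im (coeff pc k) = Im (- z * coeff q k + coeff (pCons 0 q) k)" by (simp add: cq)
    then show "coeff (pCons 0 q2) k = coeff (smult (Re z) q2 + smult (Im z) q1) k"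
      by (cases k) (simp_all add: cpc c1 c2 coeff_pCons algebra_simps)
  qed
  define v1 where "v1 = peval q1 T u"
  define v2 where "v2 = peval q2 T u"
  have r1: "T v1 = Re z *\<^sub>R v1 - Im z *\<^sub>R v2"
    using arg_cong[OF e1, of "\<lambda>c. peval c T u"] p(2)
    by (simp add: peval_add peval_smult peval_X[OF lin] v1_def v2_def algebra_simps)
  have r2: "T v2 = Im z *\<^sub>R v1 + Re z *\<^sub>R v2"
    using arg_cong[OF e2, of "\<lambda>c. peval c T u"]
    by (simp add: peval_add peval_smult peval_X[OF lin] v1_def v2_def algebra_simps)
  have "q1 \<noteq> 0 \<or> q2 \<noteq> 0"
  proof (rule ccontr)
    assume "\<not> ?thesis"
    hence "coeff q k = 0" for k using c1[of k] c2[of k] by (simp add: complex_eq_iff)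
    with \<open>q \<noteq> 0\<close> show False by (metis leading_coeff_0_iff)
  qed
  moreover have "degree q1 \<le> degree q" "degree q2 \<le> degree q"
    by (rule degree_le, use c1 c2 coeff_eq_0[of q] in auto)+
  hence "degree q1 < m" "degree q2 < m" using dq by auto
  ultimately have "v1 \<noteq> 0 \<or> v2 \<noteq> 0" using small[of q1] small[of q2] unfolding v1_def v2_def by argo
  moreover have "v1 \<in> U" "v2 \<in> U" unfolding v1_def v2_def using peval_in sU inv u by auto
  ultimately have "cplx_eigenvalue_on T U z" unfolding cplx_eigenvalue_on_def using r1 r2 by blast
  then show ?thesis by blast
qed

theorem mainTheorem3:
  fixes g :: "real \<Rightarrow> 'v::euclidean_space \<Rightarrow> 'v"
    and Vs :: "nat \<Rightarrow> 'v set" and n i :: nat and lam :: "real \<Rightarrow> real"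
  assumes "lin_semigroup g"
    and "SRPD g n Vs"
    and "i < n"
    and "first_type g (Vs i)"
    and "\<forall>x\<ge>0. lam x \<ge> 0 \<and> eigenvalues_on (g x) (Vs i) = {complex_of_real (lam x)}"
  shows "\<exists>v\<in>Vs i. v \<noteq> 0 \<and> (\<forall>x>0. g x v = lam x *\<^sub>R v)"
proof -
  define W where "W = Vs i"
  have lin: "linear (g x)" if "x \<ge> 0" for x using assms(1) that unfolding lin_semigroup_def by blast
  have comm: "g x (g y v) = g y (g x v)" if "x \<ge> 0" "y \<ge> 0" for x y v
  proof -
    have "g (x+y) = g x \<circ> g y" "g (y+x) = g y \<circ> g x"
      using assms(1) that unfolding lin_semigroup_def by auto
    then show ?thesis by (metis add.commute comp_apply)
  qed
  have W: "subspace W" "W \<noteq> {0}" "\<forall>x\<ge>0. g x ` W \<subseteq> W"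
    using assms(2,3) unfolding SRPD_def W_def by auto
  have eig: "eigenvalues_on (g x) W = {complex_of_real (lam x)}" if "x \<ge> 0" for x
    using assms(5) that W_def by auto
  define Q where "Q d = (\<exists>U. subspace U \<and> U \<subseteq> W \<and> U \<noteq> {0} \<and> (\<forall>x\<ge>0. g x ` U \<subseteq> U) \<and> dim U = d)" for d
  have "Q (dim W)" unfolding Q_def using W by blast
  define k where "k = (LEAST d. Q d)"
  have "Q k" unfolding k_def using \<open>Q (dim W)\<close> by (metis LeastI)
  then obtain U where U: "subspace U" "U \<subseteq> W" "U \<noteq> {0}" "\<forall>x\<ge>0. g x ` U \<subseteq> U" "dim U = k"
    unfolding Q_def by blast
  have kmin: "k \<le> d" if "Q d" for d unfolding k_def using that by (rule Least_le)
  obtain u0 where u0: "u0 \<in> U" "u0 \<noteq> 0" using U(1,3) subspace_0 by blast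
  have all: "g x v = lam x *\<^sub>R v" if x: "x > 0" and v: "v \<in> U" for x v
  proof -
    have x0: "x \<ge> 0" using x by simp
    note L = lin[OF x0]
    define E where "E = {v \<in> U. g x v = lam x *\<^sub>R v}"
    have sE: "subspace E"
      unfolding subspace_def E_def using U(1)
      by (auto simp: subspace_def linear_add[OF L] linear_cmul[OF L] linear_0[OF L] algebra_simps)
    have invE: "\<forall>y\<ge>0. g y ` E \<subseteq> E"
    proof (intro allI impI subsetI)
      fix y w assume y: "y \<ge> 0" and "w \<in> g y ` E"
      then obtain e where e: "e \<in> E" "w = g y e" by blast
      have "g x w = g y (g x e)" using comm[OF x0 y] e by simp
      also have "\<dots> = lam x *\<^sub>R w" using e lin[OF y] by (simp add: E_def linear_cmul)
      finally show "w \<in> E" using e U(4) y unfolding E_def by auto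
    qed
    obtain mu where mu: "cplx_eigenvalue_on (g x) U mu"
      using exists_cplx_eig[OF L U(1) _ u0] U(4) x0 by blast
    hence "cplx_eigenvalue_on (g x) W mu" using U(2) unfolding cplx_eigenvalue_on_def by blast
    hence "mu = complex_of_real (lam x)" using eig[OF x0] unfolding eigenvalues_on_def by auto
    then obtain a b where ab: "a \<in> U" "b \<in> U" "a \<noteq> 0 \<or> b \<noteq> 0" "g x a = lam x *\<^sub>R a" "g x b = lam x *\<^sub>R b"
      using mu unfolding cplx_eigenvalue_on_def by auto
    have "E \<noteq> {0}" using ab unfolding E_def by auto
    moreover have "E \<subseteq> U" unfolding E_def by auto
    ultimately have "Q (dim E)" unfolding Q_def using sE invE U(2) by blast
    hence "dim U \<le> dim E" using kmin U(5) by simp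
    hence "span E = span U" using \<open>E \<subseteq> U\<close> by (rule dim_eq_span[rotated])
    hence "E = U" using sE U(1) by (metis span_eq_iff)
    with v show ?thesis unfolding E_def by auto
  qed
  show ?thesis using u0 U(2) all unfolding W_def by blast
qed

end
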